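(* Let $\mathrm{AND}:\{0,1\}\times\{0,1\}\to\{0,1\}$ be the two-bit AND function. There exist absolute constants $c,C,\epsilon_0>0$ such that for all $0<\epsilon\le\epsilon_0$, \[ c\,\epsilon^2\le \mathrm{IC}(\mathrm{AND},1/2-\epsilon)\le C\epsilon^2\quad\text{and}\quad c\,\epsilon^2\le \mathrm{IC}^{\mathrm{ext}}(\mathrm{AND},1/2-\epsilon)\le C\epsilon^2 . \]
   Context: Two-party communication model: Alice gets $x$, Bob gets $y$; a protocol $\pi$ may use public and private randomness; the transcript $\Pi$ consists of the public random string together with all transmitted bits, and the protocol outputs a value $\pi(x,y)$ determined by the transcript. Logarithms base 2. For a distribution $\mu$ on inputs with $(X,Y)\sim\mu$: $\mathrm{IC}_\mu(\pi)=I(\Pi;X\mid Y)+I(\Pi;Y\mid X)$, $\mathrm{IC}^{\mathrm{ext}}_\mu(\pi)=I(\Pi;XY)$. A protocol performs $[f,\eta]$ if $\Pr[\pi(x,y)\ne f(x,y)]\le\eta$ for every input $(x,y)$. $\mathrm{IC}_\mu(f,\eta)=\inf\{\mathrm{IC}_\mu(\pi):\pi\text{ performs }[f,\eta]\}$, similarly $\mathrm{IC}^{\mathrm{ext}}_\mu(f,\eta)$; $\mathrm{IC}(f,\eta)=\sup_\mu\mathrm{IC}_\mu(f,\eta)$ and $\mathrm{IC}^{\mathrm{ext}}(f,\eta)=\sup_\mu\mathrm{IC}^{\mathrm{ext}}_\mu(f,\eta)$ over all distributions $\mu$ on $\{0,1\}\times\{0,1\}$. *)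

theory Defs
  imports "HOL-Probability.Probability"
begin

text \<open>Two-party randomized protocols on one-bit inputs (bool: False = 0, True = 1).
  Public randomness r, Alice's private randomness ra, Bob's private randomness rb are
  independent, finitely supported random variables (encoded in nat).
  At each step the speaker (or halting) is determined by the public string and the bits
  sent so far; the speaker's bit is a deterministic function of her input, the public
  string, her private string and the bits so far.\<close>

datatype party = Alice | Bob

record protocol =
  p_pub   :: "nat pmf"
  p_privA :: "nat pmf"
  p_privB :: "nat pmf"
  p_speaker :: "nat \<Rightarrow> bool list \<Rightarrow> party option"
  p_msgA :: "bool \<Rightarrow> nat \<Rightarrow> nat \<Rightarrow> bool list \<Rightarrow> bool"
  p_msgB :: "bool \<Rightarrow> nat \<Rightarrow> nat \<Rightarrow> bool list \<Rightarrow> bool"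
  p_out :: "nat \<Rightarrow> bool list \<Rightarrow> bool"
  p_len :: nat

definition valid_protocol :: "protocol \<Rightarrow> bool" where
  "valid_protocol P \<longleftrightarrow> finite (set_pmf (p_pub P)) \<and> finite (set_pmf (p_privA P))
     \<and> finite (set_pmf (p_privB P))"

fun run_bits :: "protocol \<Rightarrow> bool \<Rightarrow> bool \<Rightarrow> nat \<Rightarrow> nat \<Rightarrow> nat \<Rightarrow> nat \<Rightarrow> bool list \<Rightarrow> bool list" where
  "run_bits P x y r ra rb 0 h = h"
| "run_bits P x y r ra rb (Suc n) h =
     (case p_speaker P r h of
        None \<Rightarrow> h
      | Some Alice \<Rightarrow> run_bits P x y r ra rb n (h @ [p_msgA P x r ra h])
      | Some Bob \<Rightarrow> run_bits P x y r ra rb n (h @ [p_msgB P y r rb h]))"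

definition transcript :: "protocol \<Rightarrow> bool \<Rightarrow> bool \<Rightarrow> (nat \<times> bool list) pmf" where
  "transcript P x y =
     do { r \<leftarrow> p_pub P; ra \<leftarrow> p_privA P; rb \<leftarrow> p_privB P;
          return_pmf (r, run_bits P x y r ra rb (p_len P) []) }"

definition output_of :: "protocol \<Rightarrow> nat \<times> bool list \<Rightarrow> bool" where
  "output_of P t = p_out P (fst t) (snd t)"

definition performs :: "protocol \<Rightarrow> (bool \<Rightarrow> bool \<Rightarrow> bool) \<Rightarrow> real \<Rightarrow> bool" where
  "performs P f eta \<longleftrightarrow>
     (\<forall>x y. measure_pmf.prob (transcript P x y) {t. output_of P t \<noteq> f x y} \<le> eta)"

definition joint :: "(bool \<times> bool) pmf \<Rightarrow> protocol \<Rightarrow> (bool \<times> bool \<times> (nat \<times> bool list)) pmf" where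
  "joint mu P = do { (x, y) \<leftarrow> mu; t \<leftarrow> transcript P x y; return_pmf (x, y, t) }"

definition MI :: "'a pmf \<Rightarrow> ('a \<Rightarrow> 'b) \<Rightarrow> ('a \<Rightarrow> 'c) \<Rightarrow> real" where
  "MI M A B = prob_space.mutual_information (measure_pmf M) 2 (count_space UNIV) (count_space UNIV) A B"

definition CMI :: "'a pmf \<Rightarrow> ('a \<Rightarrow> 'b) \<Rightarrow> ('a \<Rightarrow> 'c) \<Rightarrow> ('a \<Rightarrow> 'd) \<Rightarrow> real" where
  "CMI M A B C = prob_space.conditional_mutual_information (measure_pmf M) 2
      (count_space UNIV) (count_space UNIV) (count_space UNIV) A B C"

definition rvX :: "bool \<times> bool \<times> (nat \<times> bool list) \<Rightarrow> bool" where "rvX w = fst w"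
definition rvY :: "bool \<times> bool \<times> (nat \<times> bool list) \<Rightarrow> bool" where "rvY w = fst (snd w)"
definition rvPi :: "bool \<times> bool \<times> (nat \<times> bool list) \<Rightarrow> nat \<times> bool list" where "rvPi w = snd (snd w)"

definition IC_prot :: "(bool \<times> bool) pmf \<Rightarrow> protocol \<Rightarrow> real" where
  "IC_prot mu P = CMI (joint mu P) rvPi rvX rvY + CMI (joint mu P) rvPi rvY rvX"

definition ICext_prot :: "(bool \<times> bool) pmf \<Rightarrow> protocol \<Rightarrow> real" where
  "ICext_prot mu P = MI (joint mu P) rvPi (\<lambda>w. (rvX w, rvY w))"

definition IC_mu :: "(bool \<times> bool) pmf \<Rightarrow> (bool \<Rightarrow> bool \<Rightarrow> bool) \<Rightarrow> real \<Rightarrow> ereal" where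
  "IC_mu mu f eta = (INF P \<in> {P. valid_protocol P \<and> performs P f eta}. ereal (IC_prot mu P))"

definition ICext_mu :: "(bool \<times> bool) pmf \<Rightarrow> (bool \<Rightarrow> bool \<Rightarrow> bool) \<Rightarrow> real \<Rightarrow> ereal" where
  "ICext_mu mu f eta = (INF P \<in> {P. valid_protocol P \<and> performs P f eta}. ereal (ICext_prot mu P))"

definition IC :: "(bool \<Rightarrow> bool \<Rightarrow> bool) \<Rightarrow> real \<Rightarrow> ereal" where
  "IC f eta = (SUP mu. IC_mu mu f eta)"

definition ICext :: "(bool \<Rightarrow> bool \<Rightarrow> bool) \<Rightarrow> real \<Rightarrow> ereal" where
  "ICext f eta = (SUP mu. ICext_mu mu f eta)"

definition AND2 :: "bool \<Rightarrow> bool \<Rightarrow> bool" where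
  "AND2 x y = (x \<and> y)"

end

theory Submission
  imports Defs
begin

lemma count_pair: "count_space (UNIV::'b::countable set) \<Otimes>\<^sub>M count_space (UNIV::'c::countable set) = count_space UNIV"
  by (simp add: pair_measure_countable)

lemma distributed_pmf:
  "distributed (measure_pmf M) (count_space UNIV) X (\<lambda>x. ennreal (pmf (map_pmf X M) x))"
proof -
  have "distr (measure_pmf M) (count_space UNIV) X = measure_pmf (map_pmf X M)"
    by (simp add: map_pmf_rep_eq)
  also have "\<dots> = density (count_space UNIV) (\<lambda>x. ennreal (pmf (map_pmf X M) x))"
    by (rule measure_pmf_eq_density)
  finally show ?thesis unfolding distributed_def by simp
qed

lemma integral_count_space_supp:
  fixes f :: "'a \<Rightarrow> real"
  assumes "finite S" "\<And>x. x \<notin> S \<Longrightarrow> f x = 0"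
  shows "integral\<^sup>L (count_space UNIV) f = sum f S"
proof -
  have "{a \<in> UNIV. f a \<noteq> 0} \<subseteq> S" using assms(2) by auto
  hence fin: "finite {a \<in> UNIV. f a \<noteq> 0}" using assms(1) finite_subset by blast
  have "integral\<^sup>L (count_space UNIV) f = (\<Sum>a | a \<in> UNIV \<and> f a \<noteq> 0. f a)"
    using lebesgue_integral_count_space_finite_support[OF fin] by simp
  also have "\<dots> = sum f S"
    using assms by (intro sum.mono_neutral_left) auto
  finally show ?thesis .
qed

lemma integrable_count_space_supp:
  fixes f :: "'a \<Rightarrow> real"
  assumes "finite S" "\<And>x. x \<notin> S \<Longrightarrow> f x = 0"
  shows "integrable (count_space UNIV) f"
proof -
  have "integrable (count_space UNIV) (\<lambda>x. \<Sum>s\<in>S. indicator {s} x * f s)"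
    by (rule Bochner_Integration.integrable_sum) simp
  moreover have "(\<lambda>x. \<Sum>s\<in>S. indicator {s} x * f s) = f"
  proof
    fix x show "(\<Sum>s\<in>S. indicator {s} x * f s) = f x"
    proof (cases "x \<in> S")
      case True
      have "(\<Sum>s\<in>S. indicator {s} x * f s) = (\<Sum>s\<in>{x}. indicator {s} x * f s)"
        using assms(1) True by (intro sum.mono_neutral_right) (auto simp: indicator_def)
      then show ?thesis by simp
    next
      case False
      then show ?thesis using assms(2)[OF False] by (auto simp: indicator_def intro!: sum.neutral)
    qed
  qed
  ultimately show ?thesis by simp
qed

lemma info_space_pmf: "information_space (measure_pmf M) 2"
  by (simp add: information_space_def information_space_axioms_def prob_space_measure_pmf)

lemma MI_sum:
  fixes M :: "'a pmf" and A :: "'a \<Rightarrow> 'b::countable" and B :: "'a \<Rightarrow> 'c::countable"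
  assumes fin: "finite (set_pmf M)"
  defines "Pxy \<equiv> pmf (map_pmf (\<lambda>w. (A w, B w)) M)"
  defines "f \<equiv> \<lambda>p. Pxy p * log 2 (Pxy p / (pmf (map_pmf A M) (fst p) * pmf (map_pmf B M) (snd p)))"
  shows "MI M A B = (\<Sum>p\<in>(\<lambda>w. (A w, B w)) ` set_pmf M. f p)"
    and "MI M A B \<ge> 0"
proof -
  interpret information_space "measure_pmf M" 2 by (rule info_space_pmf)
  have sf: "sigma_finite_measure (count_space (UNIV::'b set))" "sigma_finite_measure (count_space (UNIV::'c set))"
    by (auto intro!: sigma_finite_measure_count_space)
  have Pxy: "distributed (measure_pmf M) (count_space UNIV \<Otimes>\<^sub>M count_space UNIV) (\<lambda>x. (A x, B x)) (\<lambda>x. ennreal (Pxy x))"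
    unfolding count_pair Pxy_def by (rule distributed_pmf)
  note MIeq = mutual_information_distr[OF sf distributed_pmf _ distributed_pmf _ Pxy]
  have zero: "f x = 0" if "x \<notin> (\<lambda>w. (A w, B w)) ` set_pmf M" for x
    using that unfolding f_def Pxy_def by (simp add: pmf_eq_0_set_pmf)
  have finI: "finite ((\<lambda>w. (A w, B w)) ` set_pmf M)" using fin by simp
  have "MI M A B = integral\<^sup>L (count_space UNIV) f"
    using MIeq unfolding MI_def f_def count_pair by (simp add: Pxy_def)
  also have "\<dots> = (\<Sum>p\<in>(\<lambda>w. (A w, B w)) ` set_pmf M. f p)"
    by (rule integral_count_space_supp[OF finI zero])
  finally show "MI M A B = (\<Sum>p\<in>(\<lambda>w. (A w, B w)) ` set_pmf M. f p)" .
  have "integrable (count_space UNIV \<Otimes>\<^sub>M count_space UNIV) f"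
    unfolding count_pair by (rule integrable_count_space_supp[OF finI zero])
  then show "MI M A B \<ge> 0"
    using mutual_information_nonneg[OF sf distributed_pmf _ distributed_pmf _ Pxy]
    unfolding MI_def f_def by (simp add: Pxy_def)
qed

lemma pmf_map_sum:
  assumes "finite S" "set_pmf p \<subseteq> S"
  shows "pmf (map_pmf f p) x = (\<Sum>y\<in>{y\<in>S. f y = x}. pmf p y)"
proof -
  have "pmf (map_pmf f p) x = measure p (f -` {x})" by (rule pmf_map)
  also have "\<dots> = measure p (f -` {x} \<inter> set_pmf p)" by (simp add: measure_Int_set_pmf)
  also have "\<dots> = measure p {y\<in>S. f y = x}"
  proof -
    have "f -` {x} \<inter> set_pmf p = {y\<in>S. f y = x} \<inter> set_pmf p" using assms by auto
    then show ?thesis by (simp add: measure_Int_set_pmf)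
  qed
  also have "\<dots> = (\<Sum>y\<in>{y\<in>S. f y = x}. pmf p y)"
    using assms(1) by (simp add: measure_measure_pmf_finite)
  finally show ?thesis .
qed

lemma var_bound:
  fixes w c :: "'z \<Rightarrow> real"
  assumes fin: "finite Zs" and wpos: "\<And>z. z \<in> Zs \<Longrightarrow> w z \<ge> 0" and wsum: "(\<Sum>z\<in>Zs. w z) = 1"
    and Pdef: "P = (\<Sum>z\<in>Zs. w z * c z)" and k: "\<kappa> \<ge> 0"
    and close: "\<And>z z'. z \<in> Zs \<Longrightarrow> z' \<in> Zs \<Longrightarrow> c z \<le> (1+\<kappa>) * c z'"
  shows "(\<Sum>z\<in>Zs. w z * (c z)\<^sup>2) \<le> (1+\<kappa>\<^sup>2) * P\<^sup>2"
proof -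
  have up: "c z \<le> (1+\<kappa>) * P" if z: "z \<in> Zs" for z
  proof -
    have "c z = (\<Sum>z'\<in>Zs. w z' * c z)" using wsum by (simp add: sum_distrib_right[symmetric])
    also have "\<dots> \<le> (\<Sum>z'\<in>Zs. w z' * ((1+\<kappa>) * c z'))"
      by (intro sum_mono mult_left_mono close z) (auto simp: wpos)
    also have "\<dots> = (1+\<kappa>) * P" unfolding Pdef by (simp add: sum_distrib_left algebra_simps)
    finally show ?thesis .
  qed
  have lo: "P \<le> (1+\<kappa>) * c z" if z: "z \<in> Zs" for z
  proof -
    have "P \<le> (\<Sum>z'\<in>Zs. w z' * ((1+\<kappa>) * c z))" unfolding Pdef
      by (intro sum_mono mult_left_mono close z) (auto simp: wpos)
    also have "\<dots> = (1+\<kappa>) * c z" using wsum by (simp add: sum_distrib_right[symmetric])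
    finally show ?thesis .
  qed
  have sq: "(c z - P)\<^sup>2 \<le> \<kappa>\<^sup>2 * P\<^sup>2" if z: "z \<in> Zs" for z
  proof -
    have a: "c z - P \<le> \<kappa> * P" using up[OF z] by (simp add: algebra_simps)
    have b: "P - c z \<le> \<kappa> * P"
    proof (cases "c z \<le> P")
      case True
      have "P - c z \<le> \<kappa> * c z" using lo[OF z] by (simp add: algebra_simps)
      also have "\<dots> \<le> \<kappa> * P" using True k by (simp add: mult_left_mono)
      finally show ?thesis .
    next
      case False
      then show ?thesis using a k by (smt (verit) mult_nonneg_nonneg)
    qed
    have "\<bar>c z - P\<bar> \<le> \<kappa> * P" using a b by linarith
    hence "\<bar>c z - P\<bar>\<^sup>2 \<le> (\<kappa> * P)\<^sup>2" by (intro power_mono) auto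
    thus ?thesis by (simp add: power_mult_distrib)
  qed
  have "(\<Sum>z\<in>Zs. w z * (c z)\<^sup>2) = (\<Sum>z\<in>Zs. w z * (c z - P)\<^sup>2 + 2 * P * (w z * c z) - P\<^sup>2 * w z)"
    by (intro sum.cong) (auto simp: power2_eq_square algebra_simps)
  also have "\<dots> = (\<Sum>z\<in>Zs. w z * (c z - P)\<^sup>2) + 2 * P * P - P\<^sup>2"
    by (simp add: sum.distrib sum_subtractf sum_distrib_left[symmetric] Pdef[symmetric] wsum)
  also have "\<dots> \<le> (\<Sum>z\<in>Zs. w z * (\<kappa>\<^sup>2 * P\<^sup>2)) + 2 * P * P - P\<^sup>2"
    by (intro add_right_mono diff_right_mono sum_mono mult_left_mono sq wpos) auto
  also have "\<dots> = (1+\<kappa>\<^sup>2) * P\<^sup>2"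
  proof -
    have "(\<Sum>z\<in>Zs. w z * (\<kappa>\<^sup>2 * P\<^sup>2)) = (\<Sum>z\<in>Zs. w z) * (\<kappa>\<^sup>2 * P\<^sup>2)"
      by (simp add: sum_distrib_right)
    then show ?thesis using wsum by (simp add: power2_eq_square algebra_simps)
  qed
  finally show ?thesis .
qed

lemma marg_fst:
  fixes M :: "'a pmf" and T :: "'a \<Rightarrow> 't" and Z :: "'a \<Rightarrow> 'z"
  assumes fin: "finite (set_pmf M)"
  shows "pmf (map_pmf T M) t = (\<Sum>z\<in>Z ` set_pmf M. pmf (map_pmf (\<lambda>w. (T w, Z w)) M) (t, z))"
proof -
  let ?S = "insert t (T ` set_pmf M) \<times> Z ` set_pmf M"
  have "map_pmf T M = map_pmf fst (map_pmf (\<lambda>w. (T w, Z w)) M)" by (simp add: pmf.map_comp o_def)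
  hence "pmf (map_pmf T M) t = (\<Sum>y\<in>{y\<in>?S. fst y = t}. pmf (map_pmf (\<lambda>w. (T w, Z w)) M) y)"
    by (simp only:) (rule pmf_map_sum, use fin in auto)
  also have "{y\<in>?S. fst y = t} = Pair t ` Z ` set_pmf M" by auto
  also have "(\<Sum>y\<in>Pair t ` Z ` set_pmf M. pmf (map_pmf (\<lambda>w. (T w, Z w)) M) y) = (\<Sum>z\<in>Z ` set_pmf M. pmf (map_pmf (\<lambda>w. (T w, Z w)) M) (t, z))"
    by (subst sum.reindex) (auto simp: inj_on_def)
  finally show ?thesis .
qed

lemma MI_chi_upper:
  fixes M :: "'a pmf" and T :: "'a \<Rightarrow> 't::countable" and Z :: "'a \<Rightarrow> 'z::countable"
  assumes fin: "finite (set_pmf M)" and k: "\<kappa> \<ge> 0"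
    and close: "\<And>t z z'. z \<in> Z ` set_pmf M \<Longrightarrow> z' \<in> Z ` set_pmf M \<Longrightarrow>
       pmf (map_pmf (\<lambda>w. (T w, Z w)) M) (t, z) * pmf (map_pmf Z M) z'
         \<le> (1+\<kappa>) * (pmf (map_pmf (\<lambda>w. (T w, Z w)) M) (t, z') * pmf (map_pmf Z M) z)"
  shows "MI M T Z \<le> \<kappa>\<^sup>2 / ln 2"
proof -
  define IM where "IM = (\<lambda>w. (T w, Z w)) ` set_pmf M"
  define Ts where "Ts = T ` set_pmf M"
  define Zs where "Zs = Z ` set_pmf M"
  define pTZ where "pTZ = pmf (map_pmf (\<lambda>w. (T w, Z w)) M)"
  define pT where "pT = pmf (map_pmf T M)"
  define pZ where "pZ = pmf (map_pmf Z M)"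
  have finT: "finite Ts" and finZ: "finite Zs" and finIM: "finite IM"
    using fin by (auto simp: Ts_def Zs_def IM_def)
  have IMsub: "IM \<subseteq> Ts \<times> Zs" by (auto simp: IM_def Ts_def Zs_def)
  have zero: "pTZ p = 0" if "p \<notin> IM" for p
    using that by (simp add: pTZ_def IM_def pmf_eq_0_set_pmf)
  have nn: "pTZ p \<ge> 0" for p by (simp add: pTZ_def)
  have posT: "pT t > 0" if "t \<in> Ts" for t
    using that by (simp add: pT_def Ts_def pmf_positive)
  have posZ: "pZ z > 0" if "z \<in> Zs" for z
    using that by (simp add: pZ_def Zs_def pmf_positive)
  have posTZ: "pTZ p > 0" if "p \<in> IM" for p
    using that by (simp add: pTZ_def IM_def pmf_positive)
  have marg: "pT t = (\<Sum>z\<in>Zs. pTZ (t, z))" for t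
    unfolding pT_def pTZ_def Zs_def by (rule marg_fst[OF fin])
  have sumZ: "(\<Sum>z\<in>Zs. pZ z) = 1" unfolding pZ_def Zs_def by (rule sum_pmf_eq_1) (use fin in auto)
  have sumT: "(\<Sum>t\<in>Ts. pT t) = 1" unfolding pT_def Ts_def by (rule sum_pmf_eq_1) (use fin in auto)
  have sumIM: "(\<Sum>p\<in>IM. pTZ p) = 1" unfolding pTZ_def IM_def by (rule sum_pmf_eq_1) (use fin in auto)
  define g where "g = (\<lambda>p. (pTZ p)\<^sup>2 / (pT (fst p) * pZ (snd p)))"
  have "MI M T Z = (\<Sum>p\<in>IM. pTZ p * log 2 (pTZ p / (pT (fst p) * pZ (snd p))))"
    unfolding MI_sum(1)[OF fin] IM_def pTZ_def pT_def pZ_def by simp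
  also have "\<dots> \<le> (\<Sum>p\<in>IM. (g p - pTZ p) / ln 2)"
  proof (intro sum_mono)
    fix p assume p: "p \<in> IM"
    have pos: "pT (fst p) * pZ (snd p) > 0" using p IMsub posT posZ by (auto intro!: mult_pos_pos)
    define r where "r = pTZ p / (pT (fst p) * pZ (snd p))"
    have r: "r > 0" using pos posTZ[OF p] by (simp add: r_def)
    have "log 2 r = ln r / ln 2" by (simp add: log_def)
    also have "\<dots> \<le> (r - 1) / ln 2" using ln_le_minus_one[OF r] by (simp add: divide_right_mono)
    finally have lr: "log 2 r \<le> (r - 1) / ln 2" .
    have "pTZ p * log 2 r \<le> pTZ p * ((r - 1) / ln 2)" by (rule mult_left_mono[OF lr nn])
    also have "\<dots> = (g p - pTZ p) / ln 2" unfolding g_def r_def using pos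
      by (simp add: field_simps power2_eq_square)
    finally show "pTZ p * log 2 (pTZ p / (pT (fst p) * pZ (snd p))) \<le> (g p - pTZ p) / ln 2"
      by (simp add: r_def)
  qed
  also have "\<dots> = ((\<Sum>p\<in>IM. g p) - 1) / ln 2"
    by (simp add: sum_divide_distrib[symmetric] sum_subtractf sumIM)
  also have "(\<Sum>p\<in>IM. g p) = (\<Sum>p\<in>Ts \<times> Zs. g p)"
    by (rule sum.mono_neutral_left) (use finT finZ IMsub zero in \<open>auto simp: g_def\<close>)
  also have "\<dots> = (\<Sum>t\<in>Ts. \<Sum>z\<in>Zs. g (t, z))" by (simp add: sum.cartesian_product)
  also have "\<dots> \<le> (\<Sum>t\<in>Ts. (1 + \<kappa>\<^sup>2) * pT t)"
  proof (intro sum_mono)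
    fix t assume t: "t \<in> Ts"
    define c where "c = (\<lambda>z. pTZ (t, z) / pZ z)"
    have eq1: "pT t = (\<Sum>z\<in>Zs. pZ z * c z)" unfolding marg c_def
      by (intro sum.cong) (auto dest: posZ)
    have vb: "(\<Sum>z\<in>Zs. pZ z * (c z)\<^sup>2) \<le> (1+\<kappa>\<^sup>2) * (pT t)\<^sup>2"
    proof (rule var_bound[OF finZ _ sumZ eq1 k])
      show "\<And>z. z \<in> Zs \<Longrightarrow> pZ z \<ge> 0" using posZ by (simp add: less_imp_le)
      fix z z' assume z: "z \<in> Zs" and z': "z' \<in> Zs"
      have h: "pTZ (t, z) * pZ z' \<le> (1+\<kappa>) * (pTZ (t, z') * pZ z)"
        using close[of z z' t] z z' by (simp add: pTZ_def pZ_def Zs_def)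
      show "c z \<le> (1+\<kappa>) * c z'" unfolding c_def using posZ[OF z] posZ[OF z'] h
        by (simp add: field_simps)
    qed
    have "(\<Sum>z\<in>Zs. g (t, z)) = (\<Sum>z\<in>Zs. pZ z * (c z)\<^sup>2) / pT t"
      unfolding sum_divide_distrib g_def c_def using posT[OF t]
      by (intro sum.cong) (auto dest: posZ simp: field_simps power2_eq_square)
    also have "\<dots> \<le> (1+\<kappa>\<^sup>2) * (pT t)\<^sup>2 / pT t" using vb posT[OF t] by (simp add: divide_right_mono)
    also have "\<dots> = (1 + \<kappa>\<^sup>2) * pT t" using posT[OF t] by (simp add: power2_eq_square)
    finally show "(\<Sum>z\<in>Zs. g (t, z)) \<le> (1 + \<kappa>\<^sup>2) * pT t" .
  qed
  also have "(\<Sum>t\<in>Ts. (1 + \<kappa>\<^sup>2) * pT t) = 1 + \<kappa>\<^sup>2" by (simp add: sum_distrib_left[symmetric] sumT)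
  finally show ?thesis by (simp add: divide_right_mono)
qed

lemma finite_transcript:
  assumes "valid_protocol P" shows "finite (set_pmf (transcript P x y))"
  using assms unfolding valid_protocol_def transcript_def
  by (auto simp: set_bind_pmf)

lemma finite_joint:
  assumes "valid_protocol P" shows "finite (set_pmf (joint mu P))"
proof -
  have "set_pmf (joint mu P) \<subseteq> (\<Union>xy\<in>(UNIV::(bool\<times>bool) set). (\<lambda>t. (fst xy, snd xy, t)) ` set_pmf (transcript P (fst xy) (snd xy)))"
    unfolding joint_def by (auto simp: set_bind_pmf split: prod.splits) blast
  moreover have "finite (\<Union>xy\<in>(UNIV::(bool\<times>bool) set). (\<lambda>t. (fst xy, snd xy, t)) ` set_pmf (transcript P (fst xy) (snd xy)))"
    using finite_transcript[OF assms] by auto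
  ultimately show ?thesis by (rule finite_subset)
qed

lemma joint_pmf_gen:
  "pmf (map_pmf g (joint mu P)) v =
    (\<Sum>xy\<in>UNIV. pmf mu xy * pmf (map_pmf (\<lambda>t. g (fst xy, snd xy, t)) (transcript P (fst xy) (snd xy))) v)"
proof -
  have "map_pmf g (joint mu P) = bind_pmf mu (\<lambda>xy. map_pmf (\<lambda>t. g (fst xy, snd xy, t)) (transcript P (fst xy) (snd xy)))"
    unfolding joint_def map_bind_pmf
    by (intro bind_pmf_cong refl) (auto simp: map_pmf_def bind_assoc_pmf bind_return_pmf split: prod.splits)
  then have "pmf (map_pmf g (joint mu P)) v = (\<integral>xy. pmf (map_pmf (\<lambda>t. g (fst xy, snd xy, t)) (transcript P (fst xy) (snd xy))) v \<partial>measure_pmf mu)"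
    by (simp add: pmf_bind)
  also have "\<dots> = (\<Sum>xy\<in>UNIV. pmf (map_pmf (\<lambda>t. g (fst xy, snd xy, t)) (transcript P (fst xy) (snd xy))) v * pmf mu xy)"
    by (rule integral_measure_pmf_real) auto
  finally show ?thesis by (simp add: mult.commute)
qed

lemma pmf_map_pair_const:
  "pmf (map_pmf (\<lambda>t. (t, c)) Q) (t', c') = (if c = c' then pmf Q t' else 0)"
proof (cases "c = c'")
  case True
  have "inj (\<lambda>t. (t, c))" by (auto simp: inj_on_def)
  then show ?thesis using True pmf_map_inj'[of "\<lambda>t. (t, c)" Q t'] by simp
next
  case False
  then show ?thesis by (auto simp: pmf_eq_0_set_pmf)
qed

lemma joint_pTZ:
  assumes "inj h"
  shows "pmf (map_pmf (\<lambda>w. (rvPi w, h (rvX w, rvY w))) (joint mu P)) (t, h xy) = pmf mu xy * pmf (transcript P (fst xy) (snd xy)) t"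
proof -
  have "pmf (map_pmf (\<lambda>w. (rvPi w, h (rvX w, rvY w))) (joint mu P)) (t, h xy) =
     (\<Sum>xy'\<in>UNIV. pmf mu xy' * (if xy' = xy then pmf (transcript P (fst xy') (snd xy')) t else 0))"
    unfolding joint_pmf_gen by (intro sum.cong refl) (simp add: rvPi_def rvX_def rvY_def pmf_map_pair_const inj_eq[OF assms])
  also have "\<dots> = pmf mu xy * pmf (transcript P (fst xy) (snd xy)) t"
    by (simp add: if_distrib cong: if_cong)
  finally show ?thesis .
qed

lemma joint_pZ:
  assumes "inj h"
  shows "pmf (map_pmf (\<lambda>w. h (rvX w, rvY w)) (joint mu P)) (h xy) = pmf mu xy"
proof -
  have "pmf (map_pmf (\<lambda>w. h (rvX w, rvY w)) (joint mu P)) (h xy) =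
     (\<Sum>xy'\<in>UNIV. pmf mu xy' * (if xy' = xy then 1 else 0))"
    unfolding joint_pmf_gen by (intro sum.cong refl) (simp add: rvX_def rvY_def inj_eq[OF assms])
  also have "\<dots> = pmf mu xy" by (simp add: if_distrib cong: if_cong)
  finally show ?thesis .
qed

lemma MI_protocol_upper:
  fixes h :: "bool \<times> bool \<Rightarrow> 'z::countable"
  assumes valid: "valid_protocol P" and k: "\<kappa> \<ge> 0" and inj: "inj h"
    and close: "\<And>x y x' y' t. pmf (transcript P x y) t \<le> (1+\<kappa>) * pmf (transcript P x' y') t"
  shows "MI (joint mu P) rvPi (\<lambda>w. h (rvX w, rvY w)) \<le> \<kappa>\<^sup>2 / ln 2"
proof (rule MI_chi_upper[OF finite_joint[OF valid] k])
  fix t z z' assume "z \<in> (\<lambda>w. h (rvX w, rvY w)) ` set_pmf (joint mu P)"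
    and "z' \<in> (\<lambda>w. h (rvX w, rvY w)) ` set_pmf (joint mu P)"
  then obtain xy xy' where z: "z = h xy" and z': "z' = h xy'" by auto
  have "pmf mu xy * pmf (transcript P (fst xy) (snd xy)) t * pmf mu xy'
      \<le> (1+\<kappa>) * (pmf mu xy' * pmf (transcript P (fst xy') (snd xy')) t * pmf mu xy)"
  proof -
    have "pmf mu xy * pmf (transcript P (fst xy) (snd xy)) t * pmf mu xy'
       = (pmf mu xy * pmf mu xy') * pmf (transcript P (fst xy) (snd xy)) t" by simp
    also have "\<dots> \<le> (pmf mu xy * pmf mu xy') * ((1+\<kappa>) * pmf (transcript P (fst xy') (snd xy')) t)"
      by (intro mult_left_mono close) auto
    finally show ?thesis by (simp add: algebra_simps)
  qed
  then show "pmf (map_pmf (\<lambda>w. (rvPi w, h (rvX w, rvY w))) (joint mu P)) (t, z) *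
       pmf (map_pmf (\<lambda>w. h (rvX w, rvY w)) (joint mu P)) z'
       \<le> (1 + \<kappa>) * (pmf (map_pmf (\<lambda>w. (rvPi w, h (rvX w, rvY w))) (joint mu P)) (t, z') *
           pmf (map_pmf (\<lambda>w. h (rvX w, rvY w)) (joint mu P)) z)"
    unfolding z z' joint_pTZ[OF inj] joint_pZ[OF inj] .
qed

lemma map_and_bern:
  assumes "0 \<le> p" "p \<le> 1" "0 \<le> q" "q \<le> 1"
  shows "map_pmf (\<lambda>(b1, b2). b1 \<and> b2) (pair_pmf (bernoulli_pmf p) (bernoulli_pmf q)) = bernoulli_pmf (p * q)"
proof (rule pmf_eqI)
  fix i :: bool
  have "pmf (map_pmf (\<lambda>(b1, b2). b1 \<and> b2) (pair_pmf (bernoulli_pmf p) (bernoulli_pmf q))) i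
     = (\<Sum>y\<in>{y\<in>UNIV. (\<lambda>(b1, b2). b1 \<and> b2) y = i}. pmf (pair_pmf (bernoulli_pmf p) (bernoulli_pmf q)) y)"
    by (rule pmf_map_sum) auto
  also have "\<dots> = pmf (bernoulli_pmf (p * q)) i"
  proof (cases i)
    case True
    have "{y\<in>UNIV. (\<lambda>(b1, b2). b1 \<and> b2) y = i} = {(True, True)}" using True by auto
    then show ?thesis using True assms by (simp add: pmf_pair mult_le_one)
  next
    case False
    have "{y\<in>UNIV. (\<lambda>(b1, b2). b1 \<and> b2) y = i} = {(True, False), (False, True), (False, False)}" using False by auto
    then show ?thesis using False assms by (simp add: pmf_pair mult_le_one algebra_simps)
  qed
  finally show "pmf (map_pmf (\<lambda>(b1, b2). b1 \<and> b2) (pair_pmf (bernoulli_pmf p) (bernoulli_pmf q))) i = pmf (bernoulli_pmf (p * q)) i" .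
qed

definition enc :: "bool \<times> bool \<Rightarrow> nat" where
  "enc b = (if fst b then 1 else 0) + (if snd b then 2 else 0)"

definition msg :: "bool \<Rightarrow> nat \<Rightarrow> bool" where
  "msg x ra = (if x then odd ra else ra = 3)"

lemma map_msg:
  assumes "0 \<le> p" "p \<le> 1" "0 \<le> q" "q \<le> 1"
  shows "map_pmf (msg x) (map_pmf enc (pair_pmf (bernoulli_pmf p) (bernoulli_pmf q))) = bernoulli_pmf (if x then p else p * q)"
proof (cases x)
  case True
  have "msg x \<circ> enc = fst" using True by (auto simp: msg_def enc_def fun_eq_iff)
  then show ?thesis using True by (simp add: pmf.map_comp map_fst_pair_pmf)
next
  case False
  have "msg x \<circ> enc = (\<lambda>(b1, b2). b1 \<and> b2)" using False by (auto simp: msg_def enc_def fun_eq_iff)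
  then show ?thesis using False map_and_bern[OF assms] by (simp add: pmf.map_comp)
qed

definition qq :: "real \<Rightarrow> real" where "qq e = (1 - 2*e) / (1 + 2*e)"

definition Prot :: "real \<Rightarrow> protocol" where
  "Prot e = \<lparr> p_pub = return_pmf 0,
     p_privA = map_pmf enc (pair_pmf (bernoulli_pmf (3/4)) (bernoulli_pmf (qq e))),
     p_privB = map_pmf enc (pair_pmf (bernoulli_pmf ((2/3) * (1 + 2*e))) (bernoulli_pmf (qq e))),
     p_speaker = (\<lambda>r h. if h = [] then Some Alice else if length h = 1 then Some Bob else None),
     p_msgA = (\<lambda>x r ra h. msg x ra),
     p_msgB = (\<lambda>y r rb h. msg y rb),
     p_out = (\<lambda>r h. h = [True, True]),
     p_len = 2 \<rparr>"

definition sA :: "real \<Rightarrow> bool \<Rightarrow> real" where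
  "sA e x = (if x then 3/4 else (3/4) * qq e)"
definition tB :: "real \<Rightarrow> bool \<Rightarrow> real" where
  "tB e y = (if y then (2/3) * (1 + 2*e) else (2/3) * (1 - 2*e))"

lemma qq_bounds: "0 < e \<Longrightarrow> e \<le> 1/16 \<Longrightarrow> 0 \<le> qq e \<and> qq e \<le> 1"
  by (auto simp: qq_def field_simps)

lemma valid_Prot: "valid_protocol (Prot e)"
  unfolding valid_protocol_def Prot_def by simp

lemma transcript_Prot:
  assumes "0 < e" "e \<le> 1/16"
  shows "transcript (Prot e) x y = map_pmf (\<lambda>(a, b). (0, [a, b])) (pair_pmf (bernoulli_pmf (sA e x)) (bernoulli_pmf (tB e y)))"
proof -
  have q: "0 \<le> qq e" "qq e \<le> 1" using qq_bounds[OF assms] by auto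
  have t1: "0 \<le> (2/3) * (1 + 2*e)" "(2/3) * (1 + 2*e) \<le> (1::real)" using assms by auto
  have A: "map_pmf (msg x) (p_privA (Prot e)) = bernoulli_pmf (sA e x)"
    unfolding Prot_def sA_def using map_msg[of "3/4" "qq e" x] q by simp
  have t0: "(2/3) * (1 + 2*e) * qq e = (2/3) * (1 - 2*e)" using assms by (simp add: qq_def field_simps)
  have tBeq: "(if y then (2/3) * (1 + 2*e) else (2/3) * (1 + 2*e) * qq e) = tB e y"
    unfolding tB_def t0 by simp
  have pB: "p_privB (Prot e) = map_pmf enc (pair_pmf (bernoulli_pmf ((2/3)*(1+2*e))) (bernoulli_pmf (qq e)))"
    by (simp add: Prot_def)
  have B: "map_pmf (msg y) (p_privB (Prot e)) = bernoulli_pmf (tB e y)"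
    using map_msg[OF t1 q, of y] unfolding pB tBeq .
  have rb: "run_bits (Prot e) x y r ra rb (p_len (Prot e)) [] = [msg x ra, msg y rb]" for r ra rb
    by (simp add: Prot_def numeral_2_eq_2)
  have pub: "p_pub (Prot e) = return_pmf 0" by (simp add: Prot_def)
  have "transcript (Prot e) x y = bind_pmf (p_privA (Prot e)) (\<lambda>ra. bind_pmf (p_privB (Prot e)) (\<lambda>rb. return_pmf (0::nat, [msg x ra, msg y rb])))"
    unfolding transcript_def rb pub by (simp add: bind_return_pmf)
  also have "\<dots> = map_pmf (\<lambda>(a, b). (0, [a, b])) (pair_pmf (map_pmf (msg x) (p_privA (Prot e))) (map_pmf (msg y) (p_privB (Prot e))))"
    by (simp add: pair_pmf_def map_pmf_def bind_assoc_pmf bind_return_pmf)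
  finally show ?thesis unfolding A B .
qed

lemma sA_bounds: "0 < e \<Longrightarrow> e \<le> 1/16 \<Longrightarrow> 0 \<le> sA e x \<and> sA e x \<le> 1"
  using qq_bounds[of e] by (auto simp: sA_def)

lemma tB_bounds: "0 < e \<Longrightarrow> e \<le> 1/16 \<Longrightarrow> 0 \<le> tB e y \<and> tB e y \<le> 1"
proof -
  assume e: "0 < e" "e \<le> 1/16"
  have "(2/3) * (1 + 2*e) * qq e = (2/3) * (1 - 2*e)" using e by (simp add: qq_def field_simps)
  then show ?thesis using e by (auto simp: tB_def)
qed

lemma fac_s:
  assumes e: "0 < e" "e \<le> 1/16"
  shows "pmf (bernoulli_pmf (sA e x)) a \<le> (1 + 16*e) * pmf (bernoulli_pmf (sA e x')) a"
proof -
  have b: "0 \<le> sA e z \<and> sA e z \<le> 1" for z using sA_bounds[OF e] by blast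
  have q: "qq e = (1 - 2*e) / (1 + 2*e)" by (simp add: qq_def)
  have d: "1 + 2*e > 0" using e by simp
  have i1: "3/4 \<le> (1 + 16*e) * (3/4 * qq e)" unfolding q using e d
    by (simp add: field_simps)
  have i2: "1 - 3/4 * qq e \<le> (1 + 16*e) * (1 - 3/4)" unfolding q using e d
    by (simp add: field_simps)
  have i3: "3/4 * qq e \<le> (1 + 16*e) * (3/4)" unfolding q using e d by (simp add: field_simps)
  have i4: "1 - 3/4 \<le> (1 + 16*e) * (1 - 3/4 * qq e)" unfolding q using e d by (simp add: field_simps)
  show ?thesis
  proof (cases "x = x'")
    case True
    have "0 \<le> pmf (bernoulli_pmf (sA e x')) a" by simp
    then show ?thesis using True e by (simp add: mult_le_cancel_right1)
  next
    case False
    then show ?thesis using b[of x] b[of x'] e i1 i2 i3 i4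
      by (cases x; cases x'; cases a) (auto simp: sA_def)
  qed
qed

lemma fac_t:
  assumes e: "0 < e" "e \<le> 1/16"
  shows "pmf (bernoulli_pmf (tB e y)) a \<le> (1 + 16*e) * pmf (bernoulli_pmf (tB e y')) a"
proof -
  have b: "0 \<le> tB e z \<and> tB e z \<le> 1" for z using tB_bounds[OF e] by blast
  have t0: "(2/3) * (1 + 2*e) * qq e = (2/3) * (1 - 2*e)" using e by (simp add: qq_def field_simps)
  have i1: "(2/3) * (1 + 2*e) \<le> (1 + 16*e) * ((2/3) * (1 - 2*e))" using e
    by (simp add: field_simps)
  have i2: "1 - (2/3) * (1 - 2*e) \<le> (1 + 16*e) * (1 - (2/3) * (1 + 2*e))" using e
    by (simp add: field_simps)
  have i3: "(2/3) * (1 - 2*e) \<le> (1 + 16*e) * ((2/3) * (1 + 2*e))" using e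
    by (simp add: field_simps)
  have i4: "1 - (2/3) * (1 + 2*e) \<le> (1 + 16*e) * (1 - (2/3) * (1 - 2*e))" using e
    by (simp add: field_simps)
  show ?thesis
  proof (cases "y = y'")
    case True
    have "0 \<le> pmf (bernoulli_pmf (tB e y')) a" by simp
    then show ?thesis using True e by (simp add: mult_le_cancel_right1)
  next
    case False
    have b0: "0 \<le> (2/3) * (1 - 2*e)" "(2/3) * (1 - 2*e) \<le> 1" "0 \<le> (2/3) * (1 + 2*e)" "(2/3) * (1 + 2*e) \<le> 1"
      using e by auto
    show ?thesis using False b0 i1 i2 i3 i4
      by (cases y; cases y'; cases a) (auto simp: tB_def)
  qed
qed

lemma inj_tr: "inj (\<lambda>(a::bool, b::bool). (0::nat, [a, b]))"
  by (auto simp: inj_on_def)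

lemma close_Prot:
  assumes e: "0 < e" "e \<le> 1/16"
  shows "pmf (transcript (Prot e) x y) t \<le> (1 + 48*e) * pmf (transcript (Prot e) x' y') t"
proof (cases "t \<in> range (\<lambda>(a::bool, b::bool). (0::nat, [a, b]))")
  case True
  then obtain a b where t: "t = (\<lambda>(a::bool, b::bool). (0::nat, [a, b])) (a, b)" by auto
  have pA: "0 \<le> pmf (bernoulli_pmf (sA e x)) a" "0 \<le> pmf (bernoulli_pmf (tB e y)) b" by auto
  have "pmf (bernoulli_pmf (sA e x)) a * pmf (bernoulli_pmf (tB e y)) b
     \<le> ((1 + 16*e) * pmf (bernoulli_pmf (sA e x')) a) * ((1 + 16*e) * pmf (bernoulli_pmf (tB e y')) b)"
    by (intro mult_mono fac_s fac_t e) (auto intro: mult_nonneg_nonneg simp: e(1) less_imp_le)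
  also have "\<dots> = (1 + 16*e)^2 * (pmf (bernoulli_pmf (sA e x')) a * pmf (bernoulli_pmf (tB e y')) b)"
    by (simp add: power2_eq_square algebra_simps)
  also have "\<dots> \<le> (1 + 48*e) * (pmf (bernoulli_pmf (sA e x')) a * pmf (bernoulli_pmf (tB e y')) b)"
  proof (rule mult_right_mono)
    show "(1 + 16*e)^2 \<le> 1 + 48*e" using e by (simp add: power2_eq_square field_simps)
  qed auto
  finally show ?thesis unfolding t transcript_Prot[OF e] pmf_map_inj'[OF inj_tr] pmf_pair .
next
  case False
  then have "pmf (transcript (Prot e) x y) t = 0" "pmf (transcript (Prot e) x' y') t = 0"
    unfolding transcript_Prot[OF e] by (auto simp: pmf_eq_0_set_pmf)
  then show ?thesis by simp
qed

lemma performs_Prot: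
  assumes e: "0 < e" "e \<le> 1/16"
  shows "performs (Prot e) AND2 (1/2 - e)"
  unfolding performs_def
proof (intro allI)
  fix x y
  let ?f = "\<lambda>(a::bool, b::bool). (0::nat, [a, b])"
  let ?Q = "pair_pmf (bernoulli_pmf (sA e x)) (bernoulli_pmf (tB e y))"
  have pre: "?f -` {t. output_of (Prot e) t \<noteq> AND2 x y} = {ab. (fst ab \<and> snd ab) \<noteq> (x \<and> y)}"
    by (auto simp: output_of_def Prot_def AND2_def)
  have sb: "0 \<le> sA e x" "sA e x \<le> 1" "0 \<le> tB e y" "tB e y \<le> 1" using sA_bounds[OF e] tB_bounds[OF e] by auto
  have single: "measure ?Q {(True, True)} = sA e x * tB e y"
    using sb by (simp add: measure_pmf_single pmf_pair)
  have t0: "(2/3) * (1 + 2*e) * qq e = (2/3) * (1 - 2*e)" using e by (simp add: qq_def field_simps)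
  have "measure ?Q {ab. (fst ab \<and> snd ab) \<noteq> (x \<and> y)} \<le> 1/2 - e"
  proof (cases "x \<and> y")
    case True
    have "{ab. (fst ab \<and> snd ab) \<noteq> (x \<and> y)} = UNIV - {(True, True)}" using True by auto
    then have "measure ?Q {ab. (fst ab \<and> snd ab) \<noteq> (x \<and> y)} = 1 - sA e x * tB e y"
      using single measure_pmf.prob_compl[of "{(True, True)}" ?Q] by simp
    then show ?thesis using True e by (simp add: sA_def tB_def field_simps)
  next
    case False
    have "{ab. (fst ab \<and> snd ab) \<noteq> (x \<and> y)} = {(True, True)}" using False by auto
    then have m: "measure ?Q {ab. (fst ab \<and> snd ab) \<noteq> (x \<and> y)} = sA e x * tB e y" using single by simp
    have qb: "0 \<le> qq e" "qq e \<le> 1" using qq_bounds[OF e] by auto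
    have "sA e x * tB e y \<le> 1/2 - e"
    proof (cases x)
      case True
      then have "\<not> y" using False by simp
      then show ?thesis using True t0 by (simp add: sA_def tB_def)
    next
      case xF: False
      have "sA e x * tB e y \<le> (3/4 * qq e) * ((2/3) * (1 + 2*e))"
        using xF qb e t0 by (cases y) (auto simp: sA_def tB_def intro!: mult_left_mono mult_nonneg_nonneg)
      also have "\<dots> = 1/2 - e" using e by (simp add: qq_def field_simps)
      finally show ?thesis .
    qed
    then show ?thesis using m by simp
  qed
  then show "measure_pmf.prob (transcript (Prot e) x y) {t. output_of (Prot e) t \<noteq> AND2 x y} \<le> 1/2 - e"
    unfolding transcript_Prot[OF e] measure_map_pmf pre .
qed

lemma fe_pmf:
  fixes M :: "'a pmf" and X :: "'a \<Rightarrow> 'b::countable"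
  assumes fin: "finite (set_pmf M)"
  shows "information_space.finite_entropy (measure_pmf M) 2 (count_space UNIV) X (pmf (map_pmf X M))"
proof -
  interpret information_space "measure_pmf M" 2 by (rule info_space_pmf)
  have "integrable (count_space UNIV) (\<lambda>x. pmf (map_pmf X M) x * log 2 (pmf (map_pmf X M) x))"
    by (rule integrable_count_space_supp[of "X ` set_pmf M"]) (use fin in \<open>auto simp: pmf_eq_0_set_pmf\<close>)
  then show ?thesis unfolding finite_entropy_def using distributed_pmf by auto
qed

lemma CMI_sum:
  fixes M :: "'a pmf" and A :: "'a \<Rightarrow> 'b::countable" and B :: "'a \<Rightarrow> 'c::countable" and C :: "'a \<Rightarrow> 'd::countable"
  assumes fin: "finite (set_pmf M)"
  defines "Pabc \<equiv> pmf (map_pmf (\<lambda>w. (A w, B w, C w)) M)"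
  defines "Pac \<equiv> pmf (map_pmf (\<lambda>w. (A w, C w)) M)"
  defines "Pbc \<equiv> pmf (map_pmf (\<lambda>w. (B w, C w)) M)"
  defines "Pc \<equiv> pmf (map_pmf C M)"
  shows "CMI M A B C = (\<Sum>(x, y, z)\<in>(\<lambda>w. (A w, B w, C w)) ` set_pmf M.
      Pabc (x, y, z) * log 2 (Pabc (x, y, z) / (Pac (x, z) * (Pbc (y, z) / Pc z))))"
proof -
  interpret information_space "measure_pmf M" 2 by (rule info_space_pmf)
  have sf: "sigma_finite_measure (count_space (UNIV::'b set))" "sigma_finite_measure (count_space (UNIV::'c set))"
     "sigma_finite_measure (count_space (UNIV::'d set))"
    by (auto intro!: sigma_finite_measure_count_space)
  have eq: "prob_space.conditional_mutual_information (measure_pmf M) (2::real) (count_space UNIV) (count_space UNIV) (count_space UNIV) A B C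
    = (\<integral>(x, y, z). Pabc (x, y, z) * log 2 (Pabc (x, y, z) / (Pac (x, z) * (Pbc (y,z) / Pc z))) \<partial>(count_space UNIV \<Otimes>\<^sub>M count_space UNIV \<Otimes>\<^sub>M count_space UNIV))"
    unfolding Pabc_def Pac_def Pbc_def Pc_def
    by (rule conditional_mutual_information_generic_eq'[OF sf fe_pmf[OF fin] fe_pmf[OF fin]])
       (simp_all only: count_pair fe_pmf[OF fin])
  have finI: "finite ((\<lambda>w. (A w, B w, C w)) ` set_pmf M)" using fin by simp
  show ?thesis
    unfolding CMI_def eq count_pair
    by (rule integral_count_space_supp[OF finI]) (auto simp: Pabc_def pmf_eq_0_set_pmf split: prod.splits)
qed

lemma T1:
  fixes p m :: real
  assumes p: "0 \<le> p" and m: "0 < m"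
  shows "p * ln (p / m) \<ge> 2 * p - 2 * sqrt (p * m)"
proof (cases "p = 0")
  case True then show ?thesis by simp
next
  case False
  then have pp: "p > 0" using p by simp
  have r: "sqrt (m / p) > 0" using pp m by simp
  have "ln (sqrt (m / p)) \<le> sqrt (m / p) - 1" by (rule ln_le_minus_one[OF r])
  moreover have "ln (p / m) = - 2 * ln (sqrt (m / p))"
    using pp m by (simp add: ln_sqrt ln_div)
  ultimately have "ln (p / m) \<ge> - 2 * (sqrt (m / p) - 1)" by (simp add: algebra_simps)
  then have "p * ln (p / m) \<ge> p * (- 2 * (sqrt (m / p) - 1))" using pp by (simp add: mult_left_mono)
  moreover have "p * sqrt (m / p) = sqrt (p * m)"
  proof -
    have "sqrt (p * m) = sqrt (p^2 * (m / p))" using pp by (simp add: power2_eq_square)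
    also have "\<dots> = p * sqrt (m / p)" using pp by (simp only: real_sqrt_mult) simp
    finally show ?thesis by simp
  qed
  ultimately show ?thesis by (simp add: algebra_simps)
qed

lemma alg_ineq:
  fixes a b s :: real
  assumes a: "0 \<le> a" and b: "0 \<le> b" and s: "0 \<le> s" and ss: "s^2 = (a^2 + b^2) / 2" and pos: "a^2 + b^2 > 0"
  shows "2 * (a^2 + b^2) - 2 * s * (a + b) \<ge> (a^2 - b^2)^2 / (4 * (a^2 + b^2))"
proof -
  define u where "u = a + b"
  define v where "v = a - b"
  have e1: "2 * (a^2 + b^2) = u^2 + v^2" by (simp add: u_def v_def power2_eq_square algebra_simps)
  have e2: "4 * s^2 = u^2 + v^2" using ss e1 by simp
  have id: "(u - 2 * s)^2 = u^2 - 4 * (s * u) + 4 * s^2"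
    by (simp add: power2_eq_square algebra_simps)
  have nn: "(u - 2 * s)^2 \<ge> 0" by simp
  have su: "2 * s * (a + b) = 2 * (s * u)" by (simp add: u_def)
  have h1: "2 * (a^2 + b^2) - 2 * s * (a + b) \<ge> v^2 / 2"
    unfolding su using id nn e1 e2 by linarith
  have e3: "(a^2 - b^2)^2 = u^2 * v^2" by (simp add: u_def v_def power2_eq_square algebra_simps)
  have uv: "u^2 + v^2 > 0" using e1 pos by simp
  have "(a^2 - b^2)^2 / (4 * (a^2 + b^2)) = u^2 * v^2 / (2 * (u^2 + v^2))"
    using e1 e3 by (simp add: mult.assoc)
  also have "\<dots> \<le> (u^2 + v^2) * v^2 / (2 * (u^2 + v^2))"
    by (rule divide_right_mono) (auto intro: mult_right_mono)
  also have "\<dots> = v^2 / 2"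
  proof -
    have c: "\<And>W x :: real. W \<noteq> 0 \<Longrightarrow> W * x / (2 * W) = x / 2" by simp
    have "u^2 + v^2 \<noteq> 0" using uv by linarith
    then show ?thesis by (rule c)
  qed
  finally show ?thesis using h1 by linarith
qed

definition D :: "real \<Rightarrow> real \<Rightarrow> real" where
  "D p q = p * log 2 (2 * p / (p + q)) + q * log 2 (2 * q / (p + q))"

lemma D_lower:
  assumes p: "0 \<le> p" and q: "0 \<le> q"
  shows "D p q \<ge> (p - q)^2 / (4 * (p + q)) / ln 2"
proof (cases "p + q = 0")
  case True
  then have "p = 0" "q = 0" using p q by auto
  then show ?thesis by (simp add: D_def)
next
  case False
  then have pq: "p + q > 0" using p q by simp
  define m where "m = (p + q) / 2"
  have m: "m > 0" using pq by (simp add: m_def)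
  have l1: "2 * p / (p + q) = p / m" "2 * q / (p + q) = q / m" by (simp_all add: m_def)
  have "D p q * ln 2 = p * ln (p / m) + q * ln (q / m)"
    unfolding D_def l1 by (simp add: log_def algebra_simps)
  also have "\<dots> \<ge> (2 * p - 2 * sqrt (p * m)) + (2 * q - 2 * sqrt (q * m))"
    using T1[OF p m] T1[OF q m] by linarith
  finally have h: "D p q * ln 2 \<ge> 2 * (p + q) - 2 * sqrt m * (sqrt p + sqrt q)"
    by (simp add: real_sqrt_mult algebra_simps)
  have sa: "(sqrt p)^2 = p" "(sqrt q)^2 = q" "(sqrt m)^2 = m" using p q m by auto
  have "2 * (p + q) - 2 * sqrt m * (sqrt p + sqrt q) \<ge> (p - q)^2 / (4 * (p + q))"
    using alg_ineq[of "sqrt p" "sqrt q" "sqrt m"] sa pq unfolding m_def by (simp add: mult.assoc)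
  then have "D p q * ln 2 \<ge> (p - q)^2 / (4 * (p + q))" using h by linarith
  then have "(p - q)^2 / (4 * (p + q)) / ln 2 \<le> D p q * ln 2 / ln 2" by (rule divide_right_mono) simp
  then show ?thesis by simp
qed

lemma titu:
  fixes a b :: "'t \<Rightarrow> real"
  assumes fin: "finite S" and b: "\<And>i. i \<in> S \<Longrightarrow> b i \<ge> 0" and ab: "\<And>i. i \<in> S \<Longrightarrow> b i = 0 \<Longrightarrow> a i = 0"
    and B: "(\<Sum>i\<in>S. b i) > 0"
  shows "(\<Sum>i\<in>S. (a i)^2 / b i) \<ge> (\<Sum>i\<in>S. a i)^2 / (\<Sum>i\<in>S. b i)"
proof -
  define A where "A = (\<Sum>i\<in>S. a i)"
  define BB where "BB = (\<Sum>i\<in>S. b i)"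
  define l where "l = A / BB"
  have trm: "(a i)^2 / b i \<ge> 2 * l * a i - l^2 * b i" if i: "i \<in> S" for i
  proof (cases "b i = 0")
    case True then show ?thesis using ab[OF i] by simp
  next
    case False
    then have bp: "b i > 0" using b[OF i] by simp
    have "0 \<le> (a i - l * b i)^2 / b i" using bp by simp
    also have "(a i - l * b i)^2 / b i = (a i)^2 / b i - (2 * l * a i - l^2 * b i)"
      using bp by (simp add: power2_eq_square diff_divide_distrib add_divide_distrib algebra_simps)
    finally show ?thesis by simp
  qed
  have "(\<Sum>i\<in>S. (a i)^2 / b i) \<ge> (\<Sum>i\<in>S. 2 * l * a i - l^2 * b i)"
    by (rule sum_mono) (rule trm)
  also have "(\<Sum>i\<in>S. 2 * l * a i - l^2 * b i) = 2 * l * A - l^2 * BB"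
    by (simp add: sum_subtractf sum_distrib_left A_def BB_def)
  also have "\<dots> = A^2 / BB"
  proof -
    have BB0: "BB \<noteq> 0" using B unfolding BB_def by simp
    have "l^2 * BB = A * l" unfolding l_def using BB0 by (simp add: power2_eq_square)
    moreover have "2 * l * A = 2 * (A * l)" by simp
    moreover have "A * l = A^2 / BB" unfolding l_def by (simp add: power2_eq_square)
    ultimately show ?thesis by simp
  qed
  finally show ?thesis unfolding A_def BB_def .
qed

lemma sum_UNIV_bb: "(\<Sum>xy\<in>(UNIV::(bool\<times>bool) set). g xy) = g (False, False) + g (False, True) + g (True, False) + g (True, True)"
proof -
  have eq: "(UNIV::(bool\<times>bool) set) = {(False, False), (False, True), (True, False), (True, True)}"
    by (auto simp: UNIV_bool)
  show ?thesis unfolding eq by (simp add: add.assoc)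
qed

lemma joint_pTf:
  "pmf (map_pmf (\<lambda>w. (rvPi w, f (rvX w, rvY w))) (joint mu P)) (t, v) =
     (\<Sum>xy\<in>UNIV. if f xy = v then pmf mu xy * pmf (transcript P (fst xy) (snd xy)) t else 0)"
  unfolding joint_pmf_gen by (intro sum.cong refl) (simp add: rvPi_def rvX_def rvY_def pmf_map_pair_const)

lemma joint_pf:
  "pmf (map_pmf (\<lambda>w. f (rvX w, rvY w)) (joint mu P)) v = (\<Sum>xy\<in>UNIV. if f xy = v then pmf mu xy else 0)"
  unfolding joint_pmf_gen by (intro sum.cong refl) (simp add: rvX_def rvY_def)

definition U :: "(bool \<times> bool) pmf" where "U = pmf_of_set UNIV"

lemma pmf_U: "pmf U xy = 1/4"
  by (simp add: U_def card_UNIV_bool)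

lemma CMI_MI:
  fixes B :: "'a \<Rightarrow> 'c::countable" and C :: "'a \<Rightarrow> 'd::countable"
  shows "CMI M A B C = MI M A (\<lambda>w. (B w, C w)) - MI M A C"
proof -
  interpret prob_space "measure_pmf M" by (rule prob_space_measure_pmf)
  show ?thesis unfolding CMI_def MI_def prob_space.conditional_mutual_information_def[OF prob_space_measure_pmf]
    by (simp only: count_pair)
qed

lemma finite_Ts:
  assumes "valid_protocol P"
  shows "finite (\<Union>xy\<in>(UNIV::(bool\<times>bool) set). set_pmf (transcript P (fst xy) (snd xy)))"
  using finite_transcript[OF assms] by auto

lemma term_eq:
  fixes q S :: real
  shows "q / 4 * log 2 (q / 4 / (S / 4 * ((1/4) / (1/2)))) = 1/4 * (q * log 2 (2 * q / S))"
proof -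
  have "q / 4 / (S / 4 * ((1/4) / (1/2))) = 2 * q / S" by (simp add: field_simps)
  then show ?thesis by simp
qed

lemma CMI1_eval:
  assumes valid: "valid_protocol P"
  defines "Q \<equiv> \<lambda>x y. pmf (transcript P x y)"
  defines "Ts \<equiv> (\<Union>xy\<in>(UNIV::(bool\<times>bool) set). set_pmf (transcript P (fst xy) (snd xy)))"
  shows "CMI (joint U P) rvPi rvX rvY = 1/4 * ((\<Sum>t\<in>Ts. D (Q False False t) (Q True False t)) + (\<Sum>t\<in>Ts. D (Q False True t) (Q True True t)))"
proof -
  let ?J = "joint U P"
  have fin: "finite (set_pmf ?J)" by (rule finite_joint[OF valid])
  have finT: "finite Ts" unfolding Ts_def by (rule finite_Ts[OF valid])
  have Pabc: "pmf (map_pmf (\<lambda>w. (rvPi w, rvX w, rvY w)) ?J) (t, x, y) = Q x y t / 4" for t x y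
    using joint_pTf[of "\<lambda>xy. xy" U P t "(x, y)"] by (simp add: sum_UNIV_bb pmf_U Q_def)
  have Pac: "pmf (map_pmf (\<lambda>w. (rvPi w, rvY w)) ?J) (t, y) = (Q False y t + Q True y t) / 4" for t y
    using joint_pTf[of snd U P t y] by (cases y) (simp_all add: sum_UNIV_bb pmf_U Q_def)
  have Pbc: "pmf (map_pmf (\<lambda>w. (rvX w, rvY w)) ?J) (x, y) = 1/4" for x y
    using joint_pf[of "\<lambda>xy. xy" U P "(x, y)"] by (simp add: sum_UNIV_bb pmf_U)
  have Pc: "pmf (map_pmf rvY ?J) y = 1/2" for y
    using joint_pf[of snd U P y] by (cases y) (simp_all add: sum_UNIV_bb pmf_U)
  define F where "F = (\<lambda>(t, x, y). pmf (map_pmf (\<lambda>w. (rvPi w, rvX w, rvY w)) ?J) (t, x, y) *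
     log 2 (pmf (map_pmf (\<lambda>w. (rvPi w, rvX w, rvY w)) ?J) (t, x, y) /
      (pmf (map_pmf (\<lambda>w. (rvPi w, rvY w)) ?J) (t, y) *
       (pmf (map_pmf (\<lambda>w. (rvX w, rvY w)) ?J) (x, y) / pmf (map_pmf rvY ?J) y))))"
  have Feq: "F (t, x, y) = 1/4 * (Q x y t * log 2 (2 * Q x y t / (Q False y t + Q True y t)))" for t x y
    unfolding F_def by (simp only: prod.case Pabc Pac Pbc Pc term_eq)
  have "CMI ?J rvPi rvX rvY = (\<Sum>p\<in>(\<lambda>w. (rvPi w, rvX w, rvY w)) ` set_pmf ?J. F p)"
    unfolding CMI_sum[OF fin] F_def by simp
  also have "\<dots> = (\<Sum>p\<in>Ts \<times> UNIV. F p)"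
  proof (rule sum.mono_neutral_left)
    show "finite (Ts \<times> (UNIV :: (bool \<times> bool) set))" using finT by simp
    show "(\<lambda>w. (rvPi w, rvX w, rvY w)) ` set_pmf ?J \<subseteq> Ts \<times> UNIV"
      unfolding Ts_def joint_def by (auto simp: set_bind_pmf rvPi_def split: prod.splits) blast
    show "\<forall>p\<in>Ts \<times> UNIV - (\<lambda>w. (rvPi w, rvX w, rvY w)) ` set_pmf ?J. F p = 0"
      unfolding F_def by (auto simp: pmf_eq_0_set_pmf)
  qed
  also have "\<dots> = (\<Sum>t\<in>Ts. \<Sum>xy\<in>UNIV. F (t, xy))" by (simp add: sum.cartesian_product)
  also have "\<dots> = (\<Sum>t\<in>Ts. 1/4 * (D (Q False False t) (Q True False t) + D (Q False True t) (Q True True t)))"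
    by (intro sum.cong refl) (simp add: sum_UNIV_bb Feq D_def algebra_simps)
  finally show ?thesis by (simp add: sum_divide_distrib[symmetric] sum.distrib)
qed

lemma CMI2_eval:
  assumes valid: "valid_protocol P"
  defines "Q \<equiv> \<lambda>x y. pmf (transcript P x y)"
  defines "Ts \<equiv> (\<Union>xy\<in>(UNIV::(bool\<times>bool) set). set_pmf (transcript P (fst xy) (snd xy)))"
  shows "CMI (joint U P) rvPi rvY rvX = 1/4 * ((\<Sum>t\<in>Ts. D (Q False False t) (Q False True t)) + (\<Sum>t\<in>Ts. D (Q True False t) (Q True True t)))"
proof -
  let ?J = "joint U P"
  have fin: "finite (set_pmf ?J)" by (rule finite_joint[OF valid])
  have finT: "finite Ts" unfolding Ts_def by (rule finite_Ts[OF valid])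
  have Pabc: "pmf (map_pmf (\<lambda>w. (rvPi w, rvY w, rvX w)) ?J) (t, y, x) = Q x y t / 4" for t x y
    using joint_pTf[of "\<lambda>xy. (snd xy, fst xy)" U P t "(y, x)"] by (simp add: sum_UNIV_bb pmf_U Q_def)
  have Pac: "pmf (map_pmf (\<lambda>w. (rvPi w, rvX w)) ?J) (t, x) = (Q x False t + Q x True t) / 4" for t x
    using joint_pTf[of fst U P t x] by (cases x) (simp_all add: sum_UNIV_bb pmf_U Q_def)
  have Pbc: "pmf (map_pmf (\<lambda>w. (rvY w, rvX w)) ?J) (y, x) = 1/4" for x y
    using joint_pf[of "\<lambda>xy. (snd xy, fst xy)" U P "(y, x)"] by (simp add: sum_UNIV_bb pmf_U)
  have Pc: "pmf (map_pmf rvX ?J) x = 1/2" for x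
    using joint_pf[of fst U P x] by (cases x) (simp_all add: sum_UNIV_bb pmf_U)
  define F where "F = (\<lambda>(t, y, x). pmf (map_pmf (\<lambda>w. (rvPi w, rvY w, rvX w)) ?J) (t, y, x) *
     log 2 (pmf (map_pmf (\<lambda>w. (rvPi w, rvY w, rvX w)) ?J) (t, y, x) /
      (pmf (map_pmf (\<lambda>w. (rvPi w, rvX w)) ?J) (t, x) *
       (pmf (map_pmf (\<lambda>w. (rvY w, rvX w)) ?J) (y, x) / pmf (map_pmf rvX ?J) x))))"
  have Feq: "F (t, y, x) = 1/4 * (Q x y t * log 2 (2 * Q x y t / (Q x False t + Q x True t)))" for t x y
    unfolding F_def by (simp only: prod.case Pabc Pac Pbc Pc term_eq)
  have "CMI ?J rvPi rvY rvX = (\<Sum>p\<in>(\<lambda>w. (rvPi w, rvY w, rvX w)) ` set_pmf ?J. F p)"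
    unfolding CMI_sum[OF fin] F_def by simp
  also have "\<dots> = (\<Sum>p\<in>Ts \<times> UNIV. F p)"
  proof (rule sum.mono_neutral_left)
    show "finite (Ts \<times> (UNIV :: (bool \<times> bool) set))" using finT by simp
    show "(\<lambda>w. (rvPi w, rvY w, rvX w)) ` set_pmf ?J \<subseteq> Ts \<times> UNIV"
      unfolding Ts_def joint_def by (auto simp: set_bind_pmf rvPi_def split: prod.splits) blast
    show "\<forall>p\<in>Ts \<times> UNIV - (\<lambda>w. (rvPi w, rvY w, rvX w)) ` set_pmf ?J. F p = 0"
      unfolding F_def by (auto simp: pmf_eq_0_set_pmf)
  qed
  also have "\<dots> = (\<Sum>t\<in>Ts. \<Sum>xy\<in>UNIV. F (t, xy))" by (simp add: sum.cartesian_product)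
  also have "\<dots> = (\<Sum>t\<in>Ts. 1/4 * (D (Q False False t) (Q False True t) + D (Q True False t) (Q True True t)))"
    by (intro sum.cong refl) (simp only: sum_UNIV_bb Feq D_def ring_distribs add_ac)
  finally show ?thesis by (simp add: sum_divide_distrib[symmetric] sum.distrib)
qed


lemma meas_sum:
  assumes "finite Ts" "set_pmf Q \<subseteq> Ts"
  shows "measure (measure_pmf Q) A = (\<Sum>t\<in>Ts \<inter> A. pmf Q t)"
proof -
  have "measure (measure_pmf Q) A = measure (measure_pmf Q) (A \<inter> set_pmf Q)" by (simp add: measure_Int_set_pmf)
  also have "A \<inter> set_pmf Q = (Ts \<inter> A) \<inter> set_pmf Q" using assms by auto
  also have "measure (measure_pmf Q) \<dots> = measure (measure_pmf Q) (Ts \<inter> A)" by (simp add: measure_Int_set_pmf)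
  also have "\<dots> = (\<Sum>t\<in>Ts \<inter> A. pmf Q t)" using assms by (simp add: measure_measure_pmf_finite)
  finally show ?thesis .
qed

lemma D_nonneg: "0 \<le> p \<Longrightarrow> 0 \<le> q \<Longrightarrow> 0 \<le> D p q"
proof -
  assume pq: "0 \<le> p" "0 \<le> q"
  have "0 \<le> (p - q)^2 / (4 * (p + q)) / ln 2" using pq by (intro divide_nonneg_nonneg) auto
  then show ?thesis using D_lower[OF pq] by linarith
qed

lemma div_lower:
  assumes fin: "finite Ts" and s1: "set_pmf Q1 \<subseteq> Ts" and s2: "set_pmf Q2 \<subseteq> Ts"
  shows "(\<Sum>t\<in>Ts. D (pmf Q1 t) (pmf Q2 t)) \<ge> (measure (measure_pmf Q1) A - measure (measure_pmf Q2) A)^2 / (8 * ln 2)"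
proof -
  define S where "S = Ts \<inter> A"
  define p where "p = pmf Q1"
  define q where "q = pmf Q2"
  have finS: "finite S" using fin by (simp add: S_def)
  have m1: "measure (measure_pmf Q1) A = (\<Sum>t\<in>S. p t)" unfolding S_def p_def by (rule meas_sum[OF fin s1])
  have m2: "measure (measure_pmf Q2) A = (\<Sum>t\<in>S. q t)" unfolding S_def q_def by (rule meas_sum[OF fin s2])
  have ln2: "ln (2::real) > 0" by simp
  have "(\<Sum>t\<in>Ts. D (p t) (q t)) \<ge> (\<Sum>t\<in>Ts. (p t - q t)^2 / (4 * (p t + q t)) / ln 2)"
    by (intro sum_mono D_lower) (simp_all add: p_def q_def)
  moreover have "(\<Sum>t\<in>Ts. (p t - q t)^2 / (4 * (p t + q t)) / ln 2) \<ge> (\<Sum>t\<in>S. (p t - q t)^2 / (4 * (p t + q t)) / ln 2)"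
    by (rule sum_mono2[OF fin]) (auto simp: S_def p_def q_def intro!: divide_nonneg_nonneg)
  moreover have "(\<Sum>t\<in>S. (p t - q t)^2 / (4 * (p t + q t)) / ln 2) = (\<Sum>t\<in>S. (p t - q t)^2 / (p t + q t)) / (4 * ln 2)"
    unfolding sum_divide_distrib by (intro sum.cong refl) (simp add: mult_ac)
  moreover have E: "(\<Sum>t\<in>S. (p t - q t)^2 / (p t + q t)) \<ge> (\<Sum>t\<in>S. (p t - q t))^2 / 2"
  proof (cases "(\<Sum>t\<in>S. p t + q t) > 0")
    case True
    have "(\<Sum>t\<in>S. (p t - q t)^2 / (p t + q t)) \<ge> (\<Sum>t\<in>S. (p t - q t))^2 / (\<Sum>t\<in>S. p t + q t)"
      by (rule titu[OF finS _ _ True]) (auto simp: p_def q_def add_nonneg_eq_0_iff)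
    moreover have "(\<Sum>t\<in>S. p t + q t) \<le> 2"
    proof -
      have "(\<Sum>t\<in>S. p t) \<le> 1" "(\<Sum>t\<in>S. q t) \<le> 1" using m1 m2 by (metis measure_pmf.prob_le_1)+
      then show ?thesis by (simp add: sum.distrib)
    qed
    moreover have "(\<Sum>t\<in>S. (p t - q t))^2 / (\<Sum>t\<in>S. p t + q t) \<ge> (\<Sum>t\<in>S. (p t - q t))^2 / 2"
      using True calculation(2) by (intro divide_left_mono) auto
    ultimately show ?thesis by linarith
  next
    case False
    have nn: "\<And>t. 0 \<le> p t" "\<And>t. 0 \<le> q t" by (simp_all add: p_def q_def)
    have ge: "(\<Sum>t\<in>S. p t + q t) \<ge> 0" by (intro sum_nonneg add_nonneg_nonneg) (simp_all add: nn)
    have "(\<Sum>t\<in>S. p t + q t) = 0" using False ge by linarith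
    then have "\<forall>t\<in>S. p t + q t = 0" using finS nn by (subst (asm) sum_nonneg_eq_0_iff) (auto intro: add_nonneg_nonneg)
    then have "\<forall>t\<in>S. p t = 0 \<and> q t = 0" using nn by (simp add: add_nonneg_eq_0_iff)
    then have "(\<Sum>t\<in>S. (p t - q t)) = 0" by simp
    moreover have "(\<Sum>t\<in>S. (p t - q t)^2 / (p t + q t)) \<ge> 0" using nn by (intro sum_nonneg) auto
    ultimately show ?thesis by simp
  qed
  moreover have "(\<Sum>t\<in>S. (p t - q t)^2 / (p t + q t)) / (4 * ln 2) \<ge> (\<Sum>t\<in>S. (p t - q t))^2 / 2 / (4 * ln 2)"
    by (rule divide_right_mono[OF E]) (use ln2 in simp)
  ultimately have "(\<Sum>t\<in>Ts. D (p t) (q t)) \<ge> (\<Sum>t\<in>S. (p t - q t))^2 / 2 / (4 * ln 2)"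
    by linarith
  moreover have "(\<Sum>t\<in>S. (p t - q t)) = measure (measure_pmf Q1) A - measure (measure_pmf Q2) A"
    using m1 m2 by (simp add: sum_subtractf)
  ultimately show ?thesis by (simp add: p_def q_def mult.commute)
qed

lemma ln2_bounds: "1/2 \<le> ln (2::real)" "ln (2::real) \<le> 1"
proof -
  have "ln (1/2::real) \<le> 1/2 - 1" by (rule ln_le_minus_one) simp
  then show "1/2 \<le> ln (2::real)" by (simp add: ln_div)
  show "ln (2::real) \<le> 1" using ln_le_minus_one[of "2::real"] by simp
qed

lemma perf_facts:
  assumes perf: "performs P AND2 (1/2 - e)"
  shows "measure (measure_pmf (transcript P False True)) {t. output_of P t} \<le> 1/2 - e"
    "measure (measure_pmf (transcript P True False)) {t. output_of P t} \<le> 1/2 - e"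
    "measure (measure_pmf (transcript P True True)) {t. output_of P t} \<ge> 1/2 + e"
proof -
  have h: "\<And>x y. measure (measure_pmf (transcript P x y)) {t. output_of P t \<noteq> AND2 x y} \<le> 1/2 - e"
    using perf unfolding performs_def by blast
  show "measure (measure_pmf (transcript P False True)) {t. output_of P t} \<le> 1/2 - e"
    using h[of False True] by (simp add: AND2_def)
  show "measure (measure_pmf (transcript P True False)) {t. output_of P t} \<le> 1/2 - e"
    using h[of True False] by (simp add: AND2_def)
  have c: "measure (measure_pmf (transcript P True True)) {t. output_of P t} =
        1 - measure (measure_pmf (transcript P True True)) {t. \<not> output_of P t}"
  proof -
    have "{t. output_of P t} = UNIV - {t. \<not> output_of P t}" by auto
    then show ?thesis using measure_pmf.prob_compl[of "{t. \<not> output_of P t}" "transcript P True True"] by simp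
  qed
  show "measure (measure_pmf (transcript P True True)) {t. output_of P t} \<ge> 1/2 + e"
    using h[of True True] c by (simp add: AND2_def)
qed

lemma lower_CMI:
  assumes valid: "valid_protocol P" and perf: "performs P AND2 (1/2 - e)" and e: "0 < e"
  shows "CMI (joint U P) rvPi rvX rvY \<ge> e^2 / 8" "CMI (joint U P) rvPi rvY rvX \<ge> e^2 / 8"
proof -
  define Ts where "Ts = (\<Union>xy\<in>(UNIV::(bool\<times>bool) set). set_pmf (transcript P (fst xy) (snd xy)))"
  define Q where "Q = (\<lambda>x y. pmf (transcript P x y))"
  define m where "m = (\<lambda>x y. measure (measure_pmf (transcript P x y)) {t. output_of P t})"
  have finT: "finite Ts" unfolding Ts_def by (rule finite_Ts[OF valid])
  have sub: "set_pmf (transcript P x y) \<subseteq> Ts" for x y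
    using UN_upper[of "(x,y)" UNIV "\<lambda>xy. set_pmf (transcript P (fst xy) (snd xy))"] unfolding Ts_def by simp
  have DL: "(\<Sum>t\<in>Ts. D (Q x y t) (Q x' y' t)) \<ge> (m x y - m x' y')^2 / (8 * ln 2)" for x y x' y'
    unfolding Q_def m_def by (rule div_lower[OF finT sub sub])
  have DN: "(\<Sum>t\<in>Ts. D (Q x y t) (Q x' y' t)) \<ge> 0" for x y x' y'
    unfolding Q_def by (intro sum_nonneg D_nonneg) auto
  have pf: "m False True \<le> 1/2 - e" "m True False \<le> 1/2 - e" "m True True \<ge> 1/2 + e"
    unfolding m_def using perf_facts[OF perf] by auto
  have key: "(m x y - m True True)^2 / (8 * ln 2) \<ge> e^2 / 2" if "m x y \<le> 1/2 - e" for x y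
  proof -
    have "2 * e \<le> m True True - m x y" using that pf(3) by linarith
    then have "(2 * e)^2 \<le> (m True True - m x y)^2" by (intro power_mono) (use e in auto)
    then have a: "4 * e^2 \<le> (m x y - m True True)^2" by (simp add: power2_eq_square algebra_simps)
    have "e^2 / 2 = 4 * e^2 / 8" by simp
    also have "\<dots> \<le> (m x y - m True True)^2 / 8" using a by (simp add: divide_right_mono)
    also have "\<dots> \<le> (m x y - m True True)^2 / (8 * ln 2)"
      using ln2_bounds by (intro divide_left_mono) auto
    finally show ?thesis .
  qed
  have "CMI (joint U P) rvPi rvX rvY = 1/4 * ((\<Sum>t\<in>Ts. D (Q False False t) (Q True False t)) + (\<Sum>t\<in>Ts. D (Q False True t) (Q True True t)))"
    unfolding Ts_def Q_def by (rule CMI1_eval[OF valid])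
  moreover have "(\<Sum>t\<in>Ts. D (Q False True t) (Q True True t)) \<ge> e^2 / 2"
    using DL[of False True True True] key[OF pf(1)] by linarith
  moreover have "0 \<le> (\<Sum>t\<in>Ts. D (Q False False t) (Q True False t))" by (rule DN)
  ultimately show "CMI (joint U P) rvPi rvX rvY \<ge> e^2 / 8" by simp
  have "CMI (joint U P) rvPi rvY rvX = 1/4 * ((\<Sum>t\<in>Ts. D (Q False False t) (Q False True t)) + (\<Sum>t\<in>Ts. D (Q True False t) (Q True True t)))"
    unfolding Ts_def Q_def by (rule CMI2_eval[OF valid])
  moreover have "(\<Sum>t\<in>Ts. D (Q True False t) (Q True True t)) \<ge> e^2 / 2"
    using DL[of True False True True] key[OF pf(2)] by linarith
  moreover have "0 \<le> (\<Sum>t\<in>Ts. D (Q False False t) (Q False True t))" by (rule DN)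
  ultimately show "CMI (joint U P) rvPi rvY rvX \<ge> e^2 / 8" by simp
qed

lemma lower_IC:
  assumes valid: "valid_protocol P" and perf: "performs P AND2 (1/2 - e)" and e: "0 < e"
  shows "IC_prot U P \<ge> e^2 / 8" "ICext_prot U P \<ge> e^2 / 8"
proof -
  have c1: "CMI (joint U P) rvPi rvX rvY \<ge> e^2 / 8" and c2: "CMI (joint U P) rvPi rvY rvX \<ge> e^2 / 8"
    using lower_CMI[OF assms] by auto
  have "e^2 / 8 \<ge> 0" by simp
  then show "IC_prot U P \<ge> e^2 / 8" unfolding IC_prot_def using c1 c2 by linarith
  have "MI (joint U P) rvPi rvY \<ge> 0" by (rule MI_sum(2)[OF finite_joint[OF valid]])
  then show "ICext_prot U P \<ge> e^2 / 8" unfolding ICext_prot_def using c1 CMI_MI[of "joint U P" rvPi rvX rvY] by linarith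
qed

lemma upper_IC:
  assumes e: "0 < e" "e \<le> 1/16"
  shows "IC_prot mu (Prot e) \<le> 10000 * e^2" "ICext_prot mu (Prot e) \<le> 10000 * e^2"
proof -
  let ?k = "48 * e"
  have k: "?k \<ge> 0" using e by simp
  have fin: "finite (set_pmf (joint mu (Prot e)))" by (rule finite_joint[OF valid_Prot])
  have m1: "MI (joint mu (Prot e)) rvPi (\<lambda>w. (rvX w, rvY w)) \<le> ?k^2 / ln 2"
    using MI_protocol_upper[OF valid_Prot k, where h="\<lambda>xy. xy" and mu=mu] close_Prot[OF e] by (simp add: inj_on_def)
  have m2: "MI (joint mu (Prot e)) rvPi (\<lambda>w. (rvY w, rvX w)) \<le> ?k^2 / ln 2"
    using MI_protocol_upper[OF valid_Prot k, where h="\<lambda>xy. (snd xy, fst xy)" and mu=mu] close_Prot[OF e]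
    by (simp add: inj_on_def)
  have b: "?k^2 / ln 2 \<le> 4608 * e^2"
  proof -
    have "?k^2 / ln 2 \<le> ?k^2 / (1/2)" using ln2_bounds by (intro divide_left_mono) auto
    also have "\<dots> = 4608 * e^2" by (simp add: power2_eq_square)
    finally show ?thesis .
  qed
  have n1: "MI (joint mu (Prot e)) rvPi rvY \<ge> 0" and n2: "MI (joint mu (Prot e)) rvPi rvX \<ge> 0"
    by (rule MI_sum(2)[OF fin])+
  have "e^2 \<ge> 0" by simp
  then show "IC_prot mu (Prot e) \<le> 10000 * e^2"
    unfolding IC_prot_def CMI_MI using m1 m2 b n1 n2 by linarith
  show "ICext_prot mu (Prot e) \<le> 10000 * e^2"
    unfolding ICext_prot_def using m1 b \<open>e^2 \<ge> 0\<close> by linarith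
qed

theorem corollary2:
  "\<exists>c C eps0 :: real. c > 0 \<and> C > 0 \<and> eps0 > 0 \<and>
     (\<forall>eps. 0 < eps \<and> eps \<le> eps0 \<longrightarrow>
        ereal (c * eps\<^sup>2) \<le> IC AND2 (1/2 - eps) \<and> IC AND2 (1/2 - eps) \<le> ereal (C * eps\<^sup>2) \<and>
        ereal (c * eps\<^sup>2) \<le> ICext AND2 (1/2 - eps) \<and> ICext AND2 (1/2 - eps) \<le> ereal (C * eps\<^sup>2))"
proof -
  have main: "\<forall>eps. 0 < eps \<and> eps \<le> 1/16 \<longrightarrow>
        ereal (1/8 * eps\<^sup>2) \<le> IC AND2 (1/2 - eps) \<and> IC AND2 (1/2 - eps) \<le> ereal (10000 * eps\<^sup>2) \<and>
        ereal (1/8 * eps\<^sup>2) \<le> ICext AND2 (1/2 - eps) \<and> ICext AND2 (1/2 - eps) \<le> ereal (10000 * eps\<^sup>2)"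
  proof (intro allI impI conjI)
  fix eps :: real assume h: "0 < eps \<and> eps \<le> 1/16"
  then have e: "0 < eps" "eps \<le> 1/16" by auto
  have inS: "Prot eps \<in> {P. valid_protocol P \<and> performs P AND2 (1/2 - eps)}"
    using valid_Prot performs_Prot[OF e] by simp
  have ce: "1/8 * eps^2 = eps^2 / 8" by simp
  show "ereal (1/8 * eps\<^sup>2) \<le> IC AND2 (1/2 - eps)"
  proof -
    have "ereal (1/8 * eps\<^sup>2) \<le> IC_mu U AND2 (1/2 - eps)"
      unfolding IC_mu_def ce using lower_IC(1)[of _ eps] e by (intro INF_greatest) auto
    also have "\<dots> \<le> IC AND2 (1/2 - eps)" unfolding IC_def by (rule SUP_upper) simp
    finally show ?thesis .
  qed
  show "IC AND2 (1/2 - eps) \<le> ereal (10000 * eps\<^sup>2)"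
    unfolding IC_def IC_mu_def
    by (intro SUP_least INF_lower2[OF inS]) (use upper_IC[OF e] in simp)
  show "ereal (1/8 * eps\<^sup>2) \<le> ICext AND2 (1/2 - eps)"
  proof -
    have "ereal (1/8 * eps\<^sup>2) \<le> ICext_mu U AND2 (1/2 - eps)"
      unfolding ICext_mu_def ce using lower_IC(2)[of _ eps] e by (intro INF_greatest) auto
    also have "\<dots> \<le> ICext AND2 (1/2 - eps)" unfolding ICext_def by (rule SUP_upper) simp
    finally show ?thesis .
  qed
  show "ICext AND2 (1/2 - eps) \<le> ereal (10000 * eps\<^sup>2)"
    unfolding ICext_def ICext_mu_def
    by (intro SUP_least INF_lower2[OF inS]) (use upper_IC[OF e] in simp)
  qed
  show ?thesis
    apply (rule exI[of _ "1/8"])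
    apply (rule exI[of _ 10000])
    apply (rule exI[of _ "1/16"])
    apply (intro conjI)
       apply simp
      apply simp
     apply simp
    apply (rule main)
    done
qed

end
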